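(* Under the hypotheses of the following setting, suppose additionally that $a_i=0$ and $v(\mathcal{P}^R,\mathcal{P}^R)=v(\mathcal{P},\mathcal{P})$. Then $\phi^R(i)\le \phi(i)/2$. Setting: $\mathcal{P}=\{1,\dots,M\}$, $i\in\mathcal{P}$, $i'\notin\mathcal{P}$, $\mathcal{P}^R=\mathcal{P}\cup\{i'\}$; $v(\cdot,\mathcal{P})\colon2^{\mathcal{P}}\to\mathbb{R}$, $v(\cdot,\mathcal{P}^R)\colon2^{\mathcal{P}^R}\to\mathbb{R}$ with $v(\mathcal{P},\mathcal{P})>0$, $v(\mathcal{P}^R,\mathcal{P}^R)>0$; (1) $v(S,\mathcal{P})=v(S,\mathcal{P}^R)$ for all $S\subseteq\mathcal{P}$; (2) $v(S\cup\{i\},\mathcal{P}^R)-v(S,\mathcal{P}^R)\le a_i$ for every $S\subseteq\mathcal{P}^R\setminus\{i\}$ with $i'\in S$; (3) $v(R\cup\{i\},\mathcal{P})-v(R,\mathcal{P})\le v(Q\cup\{i\},\mathcal{P})-v(Q,\mathcal{P})$ for all $R\subseteq Q\subseteq\mathcal{P}\setminus\{i\}$.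
   Context: Normalized Shapley values: $\phi(i)=\frac{1}{v(\mathcal{P},\mathcal{P})}\sum_{S\subseteq\mathcal{P}\setminus\{i\}}\frac{|S|!\,(M-|S|-1)!}{M!}\big(v(S\cup\{i\},\mathcal{P})-v(S,\mathcal{P})\big)$ and $\phi^R(i)=\frac{1}{v(\mathcal{P}^R,\mathcal{P}^R)}\sum_{S\subseteq\mathcal{P}^R\setminus\{i\}}\frac{|S|!\,(M-|S|)!}{(M+1)!}\big(v(S\cup\{i\},\mathcal{P}^R)-v(S,\mathcal{P}^R)\big)$. *)

theory Defs
  imports Main "HOL-Library.Extended_Real" Complex_Main
begin

definition shapley_phi :: "nat \<Rightarrow> (nat set \<Rightarrow> real) \<Rightarrow> nat \<Rightarrow> real" where
  "shapley_phi M v i = (1 / v {1..M}) *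
     (\<Sum>S\<in>Pow ({1..M} - {i}).
        (fact (card S) * fact (M - card S - 1) / fact M) * (v (insert i S) - v S))"

definition shapley_phiR :: "nat \<Rightarrow> nat \<Rightarrow> (nat set \<Rightarrow> real) \<Rightarrow> nat \<Rightarrow> real" where
  "shapley_phiR M i' v i = (1 / v (insert i' {1..M})) *
     (\<Sum>S\<in>Pow (insert i' {1..M} - {i}).
        (fact (card S) * fact (M - card S) / fact (M + 1)) * (v (insert i S) - v S))"

end

theory Submission
  imports Defs
begin

lemma step_lemma:
  fixes d :: "nat set \<Rightarrow> real" and N :: "nat set"
  assumes fin: "finite N" and k: "k < card N"
    and mono: "\<And>T j. T \<subseteq> N \<Longrightarrow> j \<in> N - T \<Longrightarrow> d T \<le> d (insert j T)"
  shows "real (card N - k) * (\<Sum>T\<in>{T. T \<subseteq> N \<and> card T = k}. d T)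
       \<le> real (k+1) * (\<Sum>T\<in>{T. T \<subseteq> N \<and> card T = k+1}. d T)"
proof -
  let ?F = "\<lambda>k. {T. T \<subseteq> N \<and> card T = k}"
  have finF: "finite (?F k)" for k using fin by (auto intro: finite_subset[of _ "Pow N"])
  have "real (card N - k) * (\<Sum>T\<in>?F k. d T) = (\<Sum>T\<in>?F k. \<Sum>j\<in>N-T. d T)"
  proof -
    have "(\<Sum>j\<in>N-T. d T) = real (card N - k) * d T" if "T \<in> ?F k" for T
    proof -
      have "finite T" using that fin finite_subset by auto
      then have "card (N-T) = card N - k" using that card_Diff_subset[of T N] by auto
      then show ?thesis by simp
    qed
    note h = this
    show ?thesis unfolding sum_distrib_left by (rule sum.cong[OF refl], rule h[symmetric]) simp
  qed
  also have "\<dots> \<le> (\<Sum>T\<in>?F k. \<Sum>j\<in>N-T. d (insert j T))"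
    by (intro sum_mono) (auto intro: mono)
  also have "\<dots> = (\<Sum>(T,j)\<in>Sigma (?F k) (\<lambda>T. N - T). d (insert j T))"
    by (subst sum.Sigma) (auto simp: finF fin)
  also have "\<dots> = (\<Sum>(U,j)\<in>Sigma (?F (k+1)) (\<lambda>U. U). d U)"
  proof (rule sum.reindex_bij_witness[where i="\<lambda>(U,j). (U - {j}, j)" and j="\<lambda>(T,j). (insert j T, j)"])
    fix a assume "a \<in> Sigma (?F k) (\<lambda>T. N - T)"
    then show "(case (case a of (T, j) \<Rightarrow> (insert j T, j)) of (U, j) \<Rightarrow> (U - {j}, j)) = a" by auto
  next
    fix a assume "a \<in> Sigma (?F k) (\<lambda>T. N - T)"
    then show "(case a of (T, j) \<Rightarrow> (insert j T, j)) \<in> Sigma (?F (k+1)) (\<lambda>U. U)"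
      using fin by (auto simp: finite_subset card_insert_if)
  next
    fix b assume "b \<in> Sigma (?F (k+1)) (\<lambda>U. U)"
    then show "(case (case b of (U, j) \<Rightarrow> (U - {j}, j)) of (T, j) \<Rightarrow> (insert j T, j)) = b" by auto
  next
    fix b assume "b \<in> Sigma (?F (k+1)) (\<lambda>U. U)"
    then show "(case b of (U, j) \<Rightarrow> (U - {j}, j)) \<in> Sigma (?F k) (\<lambda>T. N - T)"
      using fin by (auto simp: finite_subset card_Diff_singleton)
  next
    fix a assume "a \<in> Sigma (?F k) (\<lambda>T. N - T)"
    then show "(case (case a of (T, j) \<Rightarrow> (insert j T, j)) of (U, j) \<Rightarrow> d U) = (case a of (T, j) \<Rightarrow> d (insert j T))" by auto
  qed
  also have "\<dots> = (\<Sum>U\<in>?F (k+1). \<Sum>j\<in>U. d U)"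
    by (subst sum.Sigma) (auto simp: finF fin finite_subset)
  also have "\<dots> = real (k+1) * (\<Sum>T\<in>?F (k+1). d T)"
    by (simp add: sum_distrib_left)
  finally show ?thesis .
qed

lemma cheb:
  fixes A :: "nat \<Rightarrow> real"
  assumes m: "\<And>k. k < n \<Longrightarrow> A k \<le> A (k+1)"
  shows "(\<Sum>k=0..n. (real n - 2 * real k) * A k) \<le> 0"
proof -
  have mono: "A k \<le> A l" if "k \<le> l" "l \<le> n" for k l
    using that
  proof (induction l)
    case 0 then show ?case by simp
  next
    case (Suc l)
    then show ?case using m[of l] by (cases "k = Suc l") auto
  qed
  let ?S = "(\<Sum>k=0..n. (real n - 2 * real k) * A k)"
  have r: "?S = (\<Sum>k=0..n. (real n - 2 * real (n - k)) * A (n - k))"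
    using sum.atLeastAtMost_rev[of "\<lambda>k. (real n - 2 * real k) * A k" 0 n] by simp
  have "2 * ?S = (\<Sum>k=0..n. (real n - 2 * real k) * (A k - A (n - k)))"
    apply (subst mult_2)
    apply (subst (2) r)
    apply (subst sum.distrib[symmetric])
    by (rule sum.cong) (auto simp: algebra_simps of_nat_diff)
  also have "\<dots> \<le> 0"
  proof (rule sum_nonpos)
    fix k assume "k \<in> {0..n}"
    then have kn: "k \<le> n" by simp
    show "(real n - 2 * real k) * (A k - A (n - k)) \<le> 0"
    proof (cases "2 * k \<le> n")
      case True
      then have "A k \<le> A (n - k)" using mono kn by simp
      then show ?thesis using True by (intro mult_nonneg_nonpos) auto
    next
      case False
      then have "A (n - k) \<le> A k" using mono kn by simp
      then show ?thesis using False by (intro mult_nonpos_nonneg) auto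
    qed
  qed
  finally show ?thesis by simp
qed

lemma group_card:
  fixes f :: "nat \<Rightarrow> real" and g :: "nat set \<Rightarrow> real"
  assumes fin: "finite N"
  shows "(\<Sum>T\<in>Pow N. f (card T) * g T) = (\<Sum>k=0..card N. f k * (\<Sum>T\<in>{T. T \<subseteq> N \<and> card T = k}. g T))"
proof -
  have "(\<Sum>T\<in>Pow N. f (card T) * g T) = (\<Sum>k\<in>{0..card N}. \<Sum>T\<in>{T. T \<in> Pow N \<and> card T = k}. f (card T) * g T)"
    by (rule sum.group[symmetric]) (auto simp: fin card_mono)
  also have "\<dots> = (\<Sum>k=0..card N. f k * (\<Sum>T\<in>{T. T \<subseteq> N \<and> card T = k}. g T))"
    by (rule sum.cong[OF refl]) (auto simp: sum_distrib_left intro!: sum.cong)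
  finally show ?thesis .
qed

lemma binom_step: "real (Suc k) * real (n choose Suc k) = real (n - k) * real (n choose k)"
proof -
  have "Suc k * (n choose Suc k) = (n - k) * (n choose k)"
    using binomial_absorption[of k n] binomial_absorb_comp[of n k] by simp
  then show ?thesis by (metis of_nat_mult)
qed

theorem mainTheorem2:
  fixes M i i' :: nat
    and v :: "nat set \<Rightarrow> real"   \<comment> \<open>v(\<cdot>, P)\<close>
    and vR :: "nat set \<Rightarrow> real"  \<comment> \<open>v(\<cdot>, P^R)\<close>
    and a_i :: real
  assumes hi: "i \<in> {1..M}"
    and hi': "i' \<notin> {1..M}"
    and hvpos: "v {1..M} > 0"
    and hvRpos: "vR (insert i' {1..M}) > 0"
    and h1: "\<forall>S. S \<subseteq> {1..M} \<longrightarrow> v S = vR S"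
    and h2: "\<forall>S. S \<subseteq> insert i' {1..M} - {i} \<and> i' \<in> S \<longrightarrow> vR (insert i S) - vR S \<le> a_i"
    and h3: "\<forall>R Q. R \<subseteq> Q \<and> Q \<subseteq> {1..M} - {i} \<longrightarrow>
               v (insert i R) - v R \<le> v (insert i Q) - v Q"
    and ha: "a_i = 0"
    and heq: "vR (insert i' {1..M}) = v {1..M}"
  shows "shapley_phiR M i' vR i \<le> shapley_phi M v i / 2"
proof -
  define N where "N = {1..M} - {i}"
  define n where "n = card N"
  define d where "d T = v (insert i T) - v T" for T
  define B where "B k = (\<Sum>T\<in>{T. T \<subseteq> N \<and> card T = k}. d T)" for k
  define A where "A k = B k / real (n choose k)" for k
  define V where "V = v {1..M}"
  have finN: "finite N" unfolding N_def by simp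
  have Mn: "M = n + 1" using hi unfolding n_def N_def by (simp add: card_Diff_singleton)
  have ii': "i' \<noteq> i" using hi hi' by auto
  have i'N: "i' \<notin> N" using hi' unfolding N_def by auto
  have mono: "d T \<le> d (insert j T)" if "T \<subseteq> N" "j \<in> N - T" for T j
  proof -
    have "T \<subseteq> insert j T \<and> insert j T \<subseteq> {1..M} - {i}" using that unfolding N_def by auto
    then show ?thesis using h3 unfolding d_def by blast
  qed
  have Amono: "A k \<le> A (k+1)" if "k < n" for k
  proof -
    have st: "real (n - k) * B k \<le> real (k+1) * B (k+1)"
      using step_lemma[OF finN, of k d] that mono unfolding B_def n_def by auto
    have c0: "real (n choose k) > 0" "real (n choose (k+1)) > 0" using that by auto
    have bs: "real (k+1) * real (n choose (k+1)) = real (n - k) * real (n choose k)"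
      using binom_step[of k n] by simp
    have "B k * real (n choose (k+1)) \<le> B (k+1) * real (n choose k)"
    proof -
      have "real (k+1) * (B k * real (n choose (k+1))) = (real (n - k) * B k) * real (n choose k)"
        using bs by (simp add: algebra_simps)
      also have "\<dots> \<le> (real (k+1) * B (k+1)) * real (n choose k)"
        using st c0 by (intro mult_right_mono) auto
      finally have "real (k+1) * (B k * real (n choose (k+1))) \<le> real (k+1) * (B (k+1) * real (n choose k))"
        by (simp add: algebra_simps)
      then show ?thesis by (rule mult_left_le_imp_le) simp
    qed
    then show ?thesis unfolding A_def using c0 by (simp add: divide_simps)
  qed
  have cheb': "(\<Sum>k=0..n. (real n - 2 * real k) * A k) \<le> 0"
    using cheb[of n A] Amono by auto
  have S1: "(\<Sum>S\<in>Pow ({1..M} - {i}). (fact (card S) * fact (M - card S - 1) / fact M) * (v (insert i S) - v S))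
     = (\<Sum>k=0..n. A k / real (n+1))"
  proof -
    have "(\<Sum>S\<in>Pow ({1..M} - {i}). (fact (card S) * fact (M - card S - 1) / fact M) * (v (insert i S) - v S))
       = (\<Sum>k=0..n. (fact k * fact (M - k - 1) / fact M) * B k)"
      unfolding B_def d_def n_def N_def[symmetric] by (rule group_card[OF finN])
    also have "\<dots> = (\<Sum>k=0..n. A k / real (n+1))"
    proof (rule sum.cong[OF refl])
      fix k assume "k \<in> {0..n}"
      then have kn: "k \<le> n" by simp
      have bf: "real (n choose k) = fact n / (fact k * fact (n - k))" using binomial_fact[OF kn] by simp
      have "M - k - 1 = n - k" using Mn by simp
      moreover have "(fact M :: real) = real (n+1) * fact n" using Mn by simp
      ultimately show "(fact k * fact (M - k - 1) / fact M) * B k = A k / real (n+1)"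
        unfolding A_def bf by (simp add: field_simps)
    qed
    finally show ?thesis .
  qed
  have SR: "(\<Sum>S\<in>Pow (insert i' {1..M} - {i}). (fact (card S) * fact (M - card S) / fact (M + 1)) * (vR (insert i S) - vR S))
     \<le> (\<Sum>k=0..n. real (n + 1 - k) / (real (n+1) * real (n+2)) * A k)"
  proof -
    let ?w = "\<lambda>S. (fact (card S) * fact (M - card S) / fact (M + 1) :: real)"
    let ?t = "\<lambda>S. ?w S * (vR (insert i S) - vR S)"
    have PE: "Pow (insert i' {1..M} - {i}) = Pow N \<union> insert i' ` Pow N"
      unfolding N_def using ii' by (auto simp: Pow_insert insert_Diff_if)
    have disj: "Pow N \<inter> insert i' ` Pow N = {}" using i'N by auto
    have "sum ?t (Pow (insert i' {1..M} - {i})) = sum ?t (Pow N) + sum ?t (insert i' ` Pow N)"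
      unfolding PE by (rule sum.union_disjoint) (use finN i'N in auto)
    also have "sum ?t (insert i' ` Pow N) \<le> 0"
    proof (rule sum_nonpos)
      fix S assume "S \<in> insert i' ` Pow N"
      then have "S \<subseteq> insert i' {1..M} - {i} \<and> i' \<in> S" unfolding N_def using ii' by auto
      then have "vR (insert i S) - vR S \<le> 0" using h2 ha by auto
      moreover have "?w S \<ge> 0" by simp
      ultimately show "?t S \<le> 0" using mult_nonneg_nonpos by blast
    qed
    also have "sum ?t (Pow N) = (\<Sum>S\<in>Pow N. ?w S * d S)"
    proof (rule sum.cong[OF refl])
      fix S assume "S \<in> Pow N"
      then have "S \<subseteq> {1..M}" "insert i S \<subseteq> {1..M}" unfolding N_def using hi by auto
      then show "?t S = ?w S * d S" unfolding d_def using h1 by auto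
    qed
    also have "\<dots> = (\<Sum>k=0..n. (fact k * fact (M - k) / fact (M + 1)) * B k)"
      unfolding B_def n_def by (rule group_card[OF finN])
    also have "\<dots> = (\<Sum>k=0..n. real (n + 1 - k) / (real (n+1) * real (n+2)) * A k)"
    proof (rule sum.cong[OF refl])
      fix k assume "k \<in> {0..n}"
      then have kn: "k \<le> n" by simp
      have bf: "real (n choose k) = fact n / (fact k * fact (n - k))" using binomial_fact[OF kn] by simp
      have "M - k = Suc (n - k)" using Mn kn by simp
      then have f1: "(fact (M - k) :: real) = real (n + 1 - k) * fact (n - k)"
        using kn by (simp add: Suc_diff_le)
      have f2: "(fact (M + 1) :: real) = real (n+2) * (real (n+1) * fact n)" using Mn
        by (simp add: algebra_simps)
      show "(fact k * fact (M - k) / fact (M + 1)) * B k = real (n + 1 - k) / (real (n+1) * real (n+2)) * A k"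
        unfolding A_def bf f1 f2 by (simp add: field_simps)
    qed
    finally show ?thesis by simp
  qed
  have fin: "(\<Sum>k=0..n. real (n + 1 - k) / (real (n+1) * real (n+2)) * A k)
      \<le> (\<Sum>k=0..n. A k / real (n+1)) / 2"
  proof -
    have "(\<Sum>k=0..n. real (n + 1 - k) / (real (n+1) * real (n+2)) * A k)
       = (\<Sum>k=0..n. A k / real (n+1) / 2 + ((real n - 2 * real k) * A k) / (2 * real (n+1) * real (n+2)))"
    proof (rule sum.cong[OF refl])
      fix k assume "k \<in> {0..n}"
      then have e: "real (n + 1 - k) = real n + 1 - real k" by (simp add: of_nat_diff)
      have p1: "real (n+1) = real n + 1" "real (n+2) = real n + 2" by simp_all
      have gen: "(x + 1 - y) / ((x+1) * (x+2)) * a = a / (x+1) / 2 + ((x - 2 * y) * a) / (2 * (x+1) * (x+2))"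
        if "x \<ge> 0" for x y a :: real
      proof -
        have h1: "x + 1 > 0" "x + 2 > 0" using that by auto
        have "a / (x+1) / 2 + ((x - 2 * y) * a) / (2 * (x+1) * (x+2)) = ((x+2) * a + (x - 2 * y) * a) / (2 * (x+1) * (x+2))"
          using h1 by (simp add: divide_simps) (simp add: algebra_simps)
        also have "\<dots> = (x + 1 - y) * a / ((x+1) * (x+2))"
          using h1 by (simp add: divide_simps) (simp add: algebra_simps)
        finally show ?thesis by simp
      qed
      show "real (n + 1 - k) / (real (n+1) * real (n+2)) * A k
          = A k / real (n+1) / 2 + ((real n - 2 * real k) * A k) / (2 * real (n+1) * real (n+2))"
        unfolding e p1 by (rule gen) simp
    qed
    also have "\<dots> = (\<Sum>k=0..n. A k / real (n+1)) / 2 + (\<Sum>k=0..n. (real n - 2 * real k) * A k) / (2 * real (n+1) * real (n+2))"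
      by (simp add: sum.distrib sum_divide_distrib)
    also have "\<dots> \<le> (\<Sum>k=0..n. A k / real (n+1)) / 2"
      using cheb' by (simp add: divide_nonpos_pos)
    finally show ?thesis .
  qed
  show ?thesis
  proof -
    have iv: "1 / v {1..M} > 0" using hvpos by simp
    have "1 / v {1..M} * (\<Sum>S\<in>Pow (insert i' {1..M} - {i}). (fact (card S) * fact (M - card S) / fact (M + 1)) * (vR (insert i S) - vR S))
        \<le> 1 / v {1..M} * ((\<Sum>k=0..n. A k / real (n+1)) / 2)"
      using SR fin iv by (intro mult_left_mono) auto
    also have "\<dots> = 1 / v {1..M} * (\<Sum>S\<in>Pow ({1..M} - {i}). (fact (card S) * fact (M - card S - 1) / fact M) * (v (insert i S) - v S)) / 2"
      using S1 by simp
    finally have X: "1 / v {1..M} * (\<Sum>S\<in>Pow (insert i' {1..M} - {i}). (fact (card S) * fact (M - card S) / fact (M + 1)) * (vR (insert i S) - vR S))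
        \<le> 1 / v {1..M} * (\<Sum>S\<in>Pow ({1..M} - {i}). (fact (card S) * fact (M - card S - 1) / fact M) * (v (insert i S) - v S)) / 2" .
    show ?thesis unfolding shapley_phiR_def shapley_phi_def heq using X by simp
  qed
qed

end
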